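(* In the system $\mathbf{BTC}$ with summation (defined in the context), for every tuplix term $t$, every data variable $u$ and every data term $p$ with $u\notin\mathit{Var}(p)$, the following identities are derivable: \[ \textstyle\sum_u (t\oplus\gamma(u-p)) = t[p/u],\qquad \sum_u t = t[p/u]+\sum_u t,\qquad \sum_u t = t[p/u]+\sum_u (t\oplus\tilde\gamma(u-p)). \]
   Context: Data: a non-trivial cancellation meadow is a commutative ring with unit with a total unary operation $(\cdot)^{-1}$ satisfying $(u^{-1})^{-1}=u$, $u\cdot(u\cdot u^{-1})=u$, $0\neq 1$ and the cancellation law ($u\neq 0$ and $uv=uw$ imply $v=w$). Fix such a $\mathcal{D}$. Data terms are built from data variables, constants $0,1$, binary $+,\cdot$ and unary $-$, $(\cdot)^{-1}$; $p/q$ abbreviates $p\cdot q^{-1}$, $p-q$ abbreviates $p+(-q)$; $\mathit{Var}(p)$ is the set of data variables in $p$. Fix a nonempty attribute set $A$. Tuplix terms are built from tuplix variables, constants $\epsilon,\delta$, entries $a(p)$ ($a\in A$), zero tests $\gamma(p)$, binary operators $\oplus$ and $+$, and, for each data variable $u$, the unary binder $\sum_u$ (binding $u$). $\tilde\gamma(p)$ abbreviates $\gamma(1-p/p)$. $\mathit{FV}(t)$ is the set of free data variables of $t$, and $t[p/u]$ is capture-avoiding substitution of $p$ for the free occurrences of $u$ in $t$ (bound variables renamed as needed). The proof system (two-sorted equational logic) has axioms (T1) $x\oplus y=y\oplus x$; (T2) $(x\oplus y)\oplus z=x\oplus(y\oplus z)$; (T3) $x\oplus\epsilon=x$; (T4)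 $x\oplus\delta=\delta$; (T5) $a(u)\oplus a(v)=a(u+v)$; (T6) $\gamma(u)=\gamma(u/u)$; (T7) $\gamma(0)=\epsilon$; (T8) $\gamma(1)=\delta$; (T9) $\gamma(u)\oplus\gamma(v)=\gamma(u/u+v/v)$; (T10) $\gamma(u-v)\oplus a(u)=\gamma(u-v)\oplus a(v)$; (C1) $x+y=y+x$; (C2) $(x+y)+z=x+(y+z)$; (C3) $x+x=x$; (C4) $x+\delta=x$; (C5) $x\oplus(y+z)=(x\oplus y)+(x\oplus z)$; (C6) $\gamma(u)+\gamma(v)=\gamma(uv)$; and the schemes, for tuplix terms $s,t$ and data term $p$: (S1) $\sum_u t=t$ if $u\notin\mathit{FV}(t)$; (S2) $\sum_u t=\sum_v t[v/u]$ if $v\notin\mathit{FV}(t)$; (S3) $\sum_u(s\oplus t)=s\oplus\sum_u t$ if $u\notin\mathit{FV}(s)$; (S4) $\sum_u(s+t)=\sum_u s+\sum_u t$; (S5) $\sum_u\gamma(u-p)=\epsilon$ if $u\notin\mathit{Var}(p)$; (S6) $\sum_u\tilde\gamma(u-p)=\epsilon$ if $u\notin\mathit{Var}(p)$; plus the rule (DE): if $\mathcal{D}\models p=q$ then $\gamma(p)=\gamma(q)$. *)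

theory Defs
  imports Main
begin

text \<open>The fixed data structure D: the carrier is a type 'd of class comm_ring_1
  (commutative ring with unit), the total unary operation is the parameter ivs.\<close>

definition cancellation_meadow :: "('d::comm_ring_1 \<Rightarrow> 'd) \<Rightarrow> bool" where
  "cancellation_meadow ivs \<longleftrightarrow>
     (\<forall>u. ivs (ivs u) = u) \<and> (\<forall>u. u * (u * ivs u) = u) \<and> (0::'d) \<noteq> 1 \<and>
     (\<forall>u v w::'d. u \<noteq> 0 \<longrightarrow> u * v = u * w \<longrightarrow> v = w)"

datatype dterm = DVar nat | DZero | DOne | DAdd dterm dterm | DMul dterm dterm
  | DNeg dterm | DInv dterm

fun dvars :: "dterm \<Rightarrow> nat set" where
  "dvars (DVar u) = {u}"
| "dvars DZero = {}"
| "dvars DOne = {}"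
| "dvars (DAdd p q) = dvars p \<union> dvars q"
| "dvars (DMul p q) = dvars p \<union> dvars q"
| "dvars (DNeg p) = dvars p"
| "dvars (DInv p) = dvars p"

definition ddiv :: "dterm \<Rightarrow> dterm \<Rightarrow> dterm" where
  "ddiv p q = DMul p (DInv q)"

definition dminus :: "dterm \<Rightarrow> dterm \<Rightarrow> dterm" where
  "dminus p q = DAdd p (DNeg q)"

fun deval :: "('d::comm_ring_1 \<Rightarrow> 'd) \<Rightarrow> (nat \<Rightarrow> 'd) \<Rightarrow> dterm \<Rightarrow> 'd" where
  "deval ivs \<sigma> (DVar u) = \<sigma> u"
| "deval ivs \<sigma> DZero = 0"
| "deval ivs \<sigma> DOne = 1"
| "deval ivs \<sigma> (DAdd p q) = deval ivs \<sigma> p + deval ivs \<sigma> q"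
| "deval ivs \<sigma> (DMul p q) = deval ivs \<sigma> p * deval ivs \<sigma> q"
| "deval ivs \<sigma> (DNeg p) = - deval ivs \<sigma> p"
| "deval ivs \<sigma> (DInv p) = ivs (deval ivs \<sigma> p)"

definition dvalid :: "('d::comm_ring_1 \<Rightarrow> 'd) \<Rightarrow> dterm \<Rightarrow> dterm \<Rightarrow> bool" where
  "dvalid ivs p q \<longleftrightarrow> (\<forall>\<sigma>. deval ivs \<sigma> p = deval ivs \<sigma> q)"

fun dsubst :: "(nat \<Rightarrow> dterm) \<Rightarrow> dterm \<Rightarrow> dterm" where
  "dsubst \<sigma> (DVar u) = \<sigma> u"
| "dsubst \<sigma> DZero = DZero"
| "dsubst \<sigma> DOne = DOne"
| "dsubst \<sigma> (DAdd p q) = DAdd (dsubst \<sigma> p) (dsubst \<sigma> q)"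
| "dsubst \<sigma> (DMul p q) = DMul (dsubst \<sigma> p) (dsubst \<sigma> q)"
| "dsubst \<sigma> (DNeg p) = DNeg (dsubst \<sigma> p)"
| "dsubst \<sigma> (DInv p) = DInv (dsubst \<sigma> p)"

datatype 'a tterm = TVar nat | Eps | Delta | Entry 'a dterm | Gamma dterm
  | Oplus "'a tterm" "'a tterm" | Plus "'a tterm" "'a tterm" | Sum nat "'a tterm"

definition Gammat :: "dterm \<Rightarrow> 'a tterm" where
  "Gammat p = Gamma (dminus DOne (ddiv p p))"

fun fv :: "'a tterm \<Rightarrow> nat set" where
  "fv (TVar x) = {}"
| "fv Eps = {}"
| "fv Delta = {}"
| "fv (Entry a p) = dvars p"
| "fv (Gamma p) = dvars p"
| "fv (Oplus s t) = fv s \<union> fv t"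
| "fv (Plus s t) = fv s \<union> fv t"
| "fv (Sum v t) = fv t - {v}"

definition fresh :: "nat set \<Rightarrow> nat" where
  "fresh F = (LEAST w. w \<notin> F)"

text \<open>Capture-avoiding simultaneous substitution of data terms for free data
  variables; a bound variable is renamed (to a fresh one) only when needed.\<close>
fun tsubst :: "(nat \<Rightarrow> dterm) \<Rightarrow> 'a tterm \<Rightarrow> 'a tterm" where
  "tsubst \<sigma> (TVar x) = TVar x"
| "tsubst \<sigma> Eps = Eps"
| "tsubst \<sigma> Delta = Delta"
| "tsubst \<sigma> (Entry a p) = Entry a (dsubst \<sigma> p)"
| "tsubst \<sigma> (Gamma p) = Gamma (dsubst \<sigma> p)"
| "tsubst \<sigma> (Oplus s t) = Oplus (tsubst \<sigma> s) (tsubst \<sigma> t)"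
| "tsubst \<sigma> (Plus s t) = Plus (tsubst \<sigma> s) (tsubst \<sigma> t)"
| "tsubst \<sigma> (Sum v t) =
     (let S = (\<Union>x\<in>fv t - {v}. dvars (\<sigma> x));
          w = (if v \<in> S then fresh (S \<union> fv t) else v)
      in Sum w (tsubst (\<sigma>(v := DVar w)) t))"

definition subst1 :: "'a tterm \<Rightarrow> dterm \<Rightarrow> nat \<Rightarrow> 'a tterm" where
  "subst1 t p u = tsubst (DVar(u := p)) t"

inductive BTC :: "('d::comm_ring_1 \<Rightarrow> 'd) \<Rightarrow> 'a tterm \<Rightarrow> 'a tterm \<Rightarrow> bool"
  for ivs :: "'d \<Rightarrow> 'd" where
  refl: "BTC ivs t t"
| sym: "BTC ivs s t \<Longrightarrow> BTC ivs t s"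
| trans: "BTC ivs s t \<Longrightarrow> BTC ivs t r \<Longrightarrow> BTC ivs s r"
| cong_Oplus: "BTC ivs s s' \<Longrightarrow> BTC ivs t t' \<Longrightarrow> BTC ivs (Oplus s t) (Oplus s' t')"
| cong_Plus: "BTC ivs s s' \<Longrightarrow> BTC ivs t t' \<Longrightarrow> BTC ivs (Plus s t) (Plus s' t')"
| cong_Sum: "BTC ivs s t \<Longrightarrow> BTC ivs (Sum u s) (Sum u t)"
| T1: "BTC ivs (Oplus x y) (Oplus y x)"
| T2: "BTC ivs (Oplus (Oplus x y) z) (Oplus x (Oplus y z))"
| T3: "BTC ivs (Oplus x Eps) x"
| T4: "BTC ivs (Oplus x Delta) Delta"
| T5: "BTC ivs (Oplus (Entry a p) (Entry a q)) (Entry a (DAdd p q))"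
| T6: "BTC ivs (Gamma p) (Gamma (ddiv p p))"
| T7: "BTC ivs (Gamma DZero) Eps"
| T8: "BTC ivs (Gamma DOne) Delta"
| T9: "BTC ivs (Oplus (Gamma p) (Gamma q)) (Gamma (DAdd (ddiv p p) (ddiv q q)))"
| T10: "BTC ivs (Oplus (Gamma (dminus p q)) (Entry a p)) (Oplus (Gamma (dminus p q)) (Entry a q))"
| C1: "BTC ivs (Plus x y) (Plus y x)"
| C2: "BTC ivs (Plus (Plus x y) z) (Plus x (Plus y z))"
| C3: "BTC ivs (Plus x x) x"
| C4: "BTC ivs (Plus x Delta) x"
| C5: "BTC ivs (Oplus x (Plus y z)) (Plus (Oplus x y) (Oplus x z))"
| C6: "BTC ivs (Plus (Gamma p) (Gamma q)) (Gamma (DMul p q))"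
| S1: "u \<notin> fv t \<Longrightarrow> BTC ivs (Sum u t) t"
| S2: "v \<notin> fv t \<Longrightarrow> BTC ivs (Sum u t) (Sum v (subst1 t (DVar v) u))"
| S3: "u \<notin> fv s \<Longrightarrow> BTC ivs (Sum u (Oplus s t)) (Oplus s (Sum u t))"
| S4: "BTC ivs (Sum u (Plus s t)) (Plus (Sum u s) (Sum u t))"
| S5: "u \<notin> dvars p \<Longrightarrow> BTC ivs (Sum u (Gamma (dminus (DVar u) p))) Eps"
| S6: "u \<notin> dvars p \<Longrightarrow> BTC ivs (Sum u (Gammat (dminus (DVar u) p))) Eps"
| DE: "dvalid ivs p q \<Longrightarrow> BTC ivs (Gamma p) (Gamma q)"

end

theory Submission
  imports Defs
begin

lemmas btc_trans[trans] = BTC.trans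

lemma dvars_finite: "finite (dvars p)" by (induct p) auto
lemma fv_finite: "finite (fv t)" by (induct t) (auto simp: dvars_finite)

lemma deval_dsubst: "deval ivs env (dsubst \<sigma> q) = deval ivs (\<lambda>x. deval ivs env (\<sigma> x)) q"
  by (induct q) auto
lemma deval_agree: "(\<And>x. x \<in> dvars q \<Longrightarrow> e1 x = e2 x) \<Longrightarrow> deval ivs e1 q = deval ivs e2 q"
  by (induct q) auto
lemma dsubst_agree: "(\<And>x. x \<in> dvars q \<Longrightarrow> s1 x = s2 x) \<Longrightarrow> dsubst s1 q = dsubst s2 q"
  by (induct q) auto
lemma dsubst_id: "dsubst DVar q = q" by (induct q) auto
lemma dvars_dsubst: "dvars (dsubst \<sigma> q) = (\<Union>y\<in>dvars q. dvars (\<sigma> y))" by (induct q) auto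
lemma dsubst_comp: "dsubst \<tau> (dsubst \<rho> q) = dsubst (\<lambda>x. dsubst \<tau> (\<rho> x)) q" by (induct q) auto

lemma fresh_notin: "finite F \<Longrightarrow> fresh F \<notin> F"
  unfolding fresh_def by (metis LeastI_ex ex_new_if_finite infinite_UNIV_nat)

lemma tsubst_Sum_ex:
  "\<exists>w. w \<notin> (\<Union>x\<in>fv t - {v}. dvars (\<sigma> x)) \<and> tsubst \<sigma> (Sum v t) = Sum w (tsubst (\<sigma>(v := DVar w)) t)"
proof -
  define S where "S = (\<Union>x\<in>fv t - {v}. dvars (\<sigma> x))"
  have fS: "finite S" unfolding S_def by (simp add: fv_finite dvars_finite)
  define w where "w = (if v \<in> S then fresh (S \<union> fv t) else v)"
  have "w \<notin> S" unfolding w_def using fresh_notin[of "S \<union> fv t"] fS fv_finite[of t] by auto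
  moreover have "tsubst \<sigma> (Sum v t) = Sum w (tsubst (\<sigma>(v := DVar w)) t)"
    unfolding w_def S_def by (simp add: Let_def)
  ultimately show ?thesis unfolding S_def by blast
qed

lemma fv_tsubst: "fv (tsubst \<sigma> t) = (\<Union>x\<in>fv t. dvars (\<sigma> x))"
proof (induct t arbitrary: \<sigma>)
  case (Sum v t)
  obtain w where w: "w \<notin> (\<Union>x\<in>fv t - {v}. dvars (\<sigma> x))"
    and e: "tsubst \<sigma> (Sum v t) = Sum w (tsubst (\<sigma>(v := DVar w)) t)" using tsubst_Sum_ex by blast
  show ?case unfolding e using w by (auto simp: Sum split: if_splits)
qed (auto simp: dvars_dsubst)

lemma tsubst_agree: "\<forall>x\<in>fv t. s1 x = s2 x \<Longrightarrow> tsubst s1 t = tsubst s2 t"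
proof (induct t arbitrary: s1 s2)
  case (Sum v t)
  have S: "(\<Union>x\<in>fv t - {v}. dvars (s1 x)) = (\<Union>x\<in>fv t - {v}. dvars (s2 x))" using Sum.prems by auto
  show ?case
    using Sum.prems by (simp add: Let_def S) (intro conjI impI arg_cong[where f="Sum _"] Sum.hyps; auto)
qed (auto intro: dsubst_agree)

lemma tsubst_id: "tsubst DVar t = t"
  by (induct t) (auto simp: Let_def dsubst_id)


lemma AL:
  assumes CL: "\<And>\<rho> \<tau>. BTC ivs (tsubst \<tau> (tsubst \<rho> t)) (tsubst (\<lambda>x. dsubst \<tau> (\<rho> x)) t)"
  and w1: "w1 \<notin> (\<Union>x\<in>fv t - {v}. dvars (\<theta> x))" and w2: "w2 \<notin> (\<Union>x\<in>fv t - {v}. dvars (\<theta> x))"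
  shows "BTC ivs (Sum w1 (tsubst (\<theta>(v := DVar w1)) t)) (Sum w2 (tsubst (\<theta>(v := DVar w2)) t))"
proof (cases "w1 = w2")
  case True then show ?thesis by (simp add: BTC.refl)
next
  case False
  have nf: "w2 \<notin> fv (tsubst (\<theta>(v := DVar w1)) t)" using w2 False by (auto simp: fv_tsubst split: if_splits)
  have 1: "BTC ivs (Sum w1 (tsubst (\<theta>(v := DVar w1)) t)) (Sum w2 (subst1 (tsubst (\<theta>(v := DVar w1)) t) (DVar w2) w1))"
    by (rule BTC.S2[OF nf])
  have 2: "BTC ivs (subst1 (tsubst (\<theta>(v := DVar w1)) t) (DVar w2) w1) (tsubst (\<lambda>x. dsubst (DVar(w1 := DVar w2)) ((\<theta>(v := DVar w1)) x)) t)"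
    unfolding subst1_def by (rule CL)
  have 3: "tsubst (\<lambda>x. dsubst (DVar(w1 := DVar w2)) ((\<theta>(v := DVar w1)) x)) t = tsubst (\<theta>(v := DVar w2)) t"
  proof (rule tsubst_agree, intro ballI)
    fix x assume x: "x \<in> fv t"
    show "dsubst (DVar(w1 := DVar w2)) ((\<theta>(v := DVar w1)) x) = (\<theta>(v := DVar w2)) x"
    proof (cases "x = v")
      case True then show ?thesis by simp
    next
      case False
      then have "w1 \<notin> dvars (\<theta> x)" using w1 x by auto
      then have "dsubst (DVar(w1 := DVar w2)) (\<theta> x) = dsubst DVar (\<theta> x)" by (intro dsubst_agree) auto
      then show ?thesis using False by (simp add: dsubst_id)
    qed
  qed
  show ?thesis using BTC.trans[OF 1 BTC.cong_Sum[OF 2[unfolded 3]]] .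
qed

lemma CL: "BTC ivs (tsubst \<tau> (tsubst \<rho> t)) (tsubst (\<lambda>x. dsubst \<tau> (\<rho> x)) t)"
proof (induct t arbitrary: \<rho> \<tau>)
  case (Sum v t)
  obtain w1 where w1: "w1 \<notin> (\<Union>x\<in>fv t - {v}. dvars (\<rho> x))"
    and e1: "tsubst \<rho> (Sum v t) = Sum w1 (tsubst (\<rho>(v := DVar w1)) t)" using tsubst_Sum_ex by blast
  obtain w2 where w2: "w2 \<notin> (\<Union>y\<in>fv (tsubst (\<rho>(v := DVar w1)) t) - {w1}. dvars (\<tau> y))"
    and e2: "tsubst \<tau> (Sum w1 (tsubst (\<rho>(v := DVar w1)) t))
       = Sum w2 (tsubst (\<tau>(w1 := DVar w2)) (tsubst (\<rho>(v := DVar w1)) t))" using tsubst_Sum_ex by blast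
  define \<mu> where "\<mu> = (\<lambda>x. dsubst \<tau> (\<rho> x))"
  obtain w3 where w3: "w3 \<notin> (\<Union>x\<in>fv t - {v}. dvars (\<mu> x))"
    and e3: "tsubst \<mu> (Sum v t) = Sum w3 (tsubst (\<mu>(v := DVar w3)) t)" using tsubst_Sum_ex by blast
  have a: "BTC ivs (Sum w2 (tsubst (\<tau>(w1 := DVar w2)) (tsubst (\<rho>(v := DVar w1)) t)))
     (Sum w2 (tsubst (\<lambda>x. dsubst (\<tau>(w1 := DVar w2)) ((\<rho>(v := DVar w1)) x)) t))"
    by (rule BTC.cong_Sum[OF Sum.hyps])
  have b: "tsubst (\<lambda>x. dsubst (\<tau>(w1 := DVar w2)) ((\<rho>(v := DVar w1)) x)) t = tsubst (\<mu>(v := DVar w2)) t"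
  proof (rule tsubst_agree, intro ballI)
    fix x assume x: "x \<in> fv t"
    show "dsubst (\<tau>(w1 := DVar w2)) ((\<rho>(v := DVar w1)) x) = (\<mu>(v := DVar w2)) x"
    proof (cases "x = v")
      case True then show ?thesis by simp
    next
      case False
      then have "w1 \<notin> dvars (\<rho> x)" using w1 x by auto
      then have "dsubst (\<tau>(w1 := DVar w2)) (\<rho> x) = dsubst \<tau> (\<rho> x)" by (intro dsubst_agree) auto
      then show ?thesis using False by (simp add: \<mu>_def)
    qed
  qed
  have w2': "w2 \<notin> (\<Union>x\<in>fv t - {v}. dvars (\<mu> x))"
  proof
    assume "w2 \<in> (\<Union>x\<in>fv t - {v}. dvars (\<mu> x))"
    then obtain x y where x: "x \<in> fv t" "x \<noteq> v" and y: "y \<in> dvars (\<rho> x)" and wy: "w2 \<in> dvars (\<tau> y)"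
      by (auto simp: \<mu>_def dvars_dsubst)
    have "y \<in> fv (tsubst (\<rho>(v := DVar w1)) t)" using x y by (auto simp: fv_tsubst)
    moreover have "y \<noteq> w1" using w1 x y by auto
    ultimately show False using w2 wy by auto
  qed
  have c: "BTC ivs (Sum w2 (tsubst (\<mu>(v := DVar w2)) t)) (Sum w3 (tsubst (\<mu>(v := DVar w3)) t))"
    by (rule AL[OF Sum.hyps w2' w3])
  have "BTC ivs (tsubst \<tau> (tsubst \<rho> (Sum v t))) (tsubst \<mu> (Sum v t))"
    unfolding e1 e2 e3 using BTC.trans[OF a c[folded b]] .
  then show ?case by (simp add: \<mu>_def)
qed (auto simp: dsubst_comp intro: BTC.intros)


lemma cm_inv1:
  fixes ivs :: "'d::comm_ring_1 \<Rightarrow> 'd"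
  assumes cm: "cancellation_meadow ivs" and x: "x \<noteq> 0" shows "x * ivs x = 1"
proof -
  have "x * (x * ivs x) = x * 1" using cm unfolding cancellation_meadow_def by simp
  then show ?thesis using cm x unfolding cancellation_meadow_def by blast
qed

lemma cm_e01:
  fixes ivs :: "'d::comm_ring_1 \<Rightarrow> 'd"
  assumes cm: "cancellation_meadow ivs" shows "x * ivs x = 0 \<or> x * ivs x = 1"
  using cm_inv1[OF cm, of x] by (cases "x = 0") auto

lemma cm_cancel:
  fixes ivs :: "'d::comm_ring_1 \<Rightarrow> 'd"
  assumes cm: "cancellation_meadow ivs" shows "x * (x * ivs x) = x"
  using cm unfolding cancellation_meadow_def by simp

lemma triv:
  fixes ivs :: "'d::comm_ring_1 \<Rightarrow> 'd"
  assumes cm: "cancellation_meadow ivs" and two: "(1::'d) + 1 = 0"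
  shows "BTC ivs s t"
proof -
  have i1: "ivs 1 = 1" using cm_cancel[OF cm, of 1] by simp
  have v: "dvalid ivs DZero (DAdd (ddiv DOne DOne) (ddiv DOne DOne))"
    unfolding dvalid_def ddiv_def using i1 two by simp
  have "BTC ivs Eps (Gamma DZero)" by (rule BTC.sym, rule BTC.T7)
  also have "BTC ivs ... (Gamma (DAdd (ddiv DOne DOne) (ddiv DOne DOne)))" by (rule BTC.DE[OF v])
  also have "BTC ivs ... (Oplus (Gamma DOne) (Gamma DOne))" by (rule BTC.sym, rule BTC.T9)
  also have "BTC ivs ... (Oplus Delta Delta)" by (intro BTC.cong_Oplus BTC.T8)
  also have "BTC ivs ... Delta" by (rule BTC.T4)
  finally have ED: "BTC ivs Eps Delta" .
  have D: "BTC ivs x Delta" for x :: "'a tterm"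
  proof -
    have "BTC ivs x (Oplus x Eps)" by (rule BTC.sym, rule BTC.T3)
    also have "BTC ivs ... (Oplus x Delta)" by (intro BTC.cong_Oplus BTC.refl ED)
    also have "BTC ivs ... Delta" by (rule BTC.T4)
    finally show ?thesis .
  qed
  show ?thesis using BTC.trans[OF D BTC.sym[OF D]] .
qed

lemma GL:
  fixes ivs :: "'d::comm_ring_1 \<Rightarrow> 'd"
  assumes cm: "cancellation_meadow ivs"
  and h: "\<And>env. deval ivs env a = 0 \<Longrightarrow> deval ivs env r1 = deval ivs env r2"
  shows "BTC ivs (Oplus (Gamma a) (Gamma r1)) (Oplus (Gamma a) (Gamma r2))"
proof (cases "(1::'d) + 1 = 0")
  case True then show ?thesis using triv[OF cm] by blast
next
  case False
  have one: "(1 + y * ivs y) * ivs (1 + y * ivs y) = 1" for y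
  proof -
    have "1 + y * ivs y \<noteq> 0" using cm_e01[OF cm, of y] False by auto
    then show ?thesis by (rule cm_inv1[OF cm])
  qed
  define X1 where "X1 = DAdd (ddiv a a) (ddiv r1 r1)"
  define X2 where "X2 = DAdd (ddiv a a) (ddiv r2 r2)"
  have v: "dvalid ivs (ddiv X1 X1) (ddiv X2 X2)"
    unfolding dvalid_def
  proof
    fix env
    show "deval ivs env (ddiv X1 X1) = deval ivs env (ddiv X2 X2)"
    proof (cases "deval ivs env a = 0")
      case True then show ?thesis using h[of env] by (simp add: X1_def X2_def ddiv_def)
    next
      case False
      then have "deval ivs env a * ivs (deval ivs env a) = 1" by (rule cm_inv1[OF cm])
      then show ?thesis using one by (simp add: X1_def X2_def ddiv_def)
    qed
  qed
  have "BTC ivs (Oplus (Gamma a) (Gamma r1)) (Gamma X1)" unfolding X1_def by (rule BTC.T9)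
  also have "BTC ivs ... (Gamma (ddiv X1 X1))" by (rule BTC.T6)
  also have "BTC ivs ... (Gamma (ddiv X2 X2))" by (rule BTC.DE[OF v])
  also have "BTC ivs ... (Gamma X2)" by (rule BTC.sym, rule BTC.T6)
  also have "BTC ivs ... (Oplus (Gamma a) (Gamma r2))" unfolding X2_def by (rule BTC.sym, rule BTC.T9)
  finally show ?thesis .
qed


lemma K:
  fixes ivs :: "'d::comm_ring_1 \<Rightarrow> 'd"
  assumes cm: "cancellation_meadow ivs"
  shows "\<forall>x\<in>fv t. \<forall>env. deval ivs env a = 0 \<longrightarrow> deval ivs env (s1 x) = deval ivs env (s2 x)
    \<Longrightarrow> BTC ivs (Oplus (Gamma a) (tsubst s1 t)) (Oplus (Gamma a) (tsubst s2 t))"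
proof (induct t arbitrary: s1 s2)
  case (Entry b q)
  define q1 where "q1 = dsubst s1 q"
  define q2 where "q2 = dsubst s2 q"
  have hq: "deval ivs env q1 = deval ivs env q2" if "deval ivs env a = 0" for env
    unfolding q1_def q2_def deval_dsubst using Entry that by (intro deval_agree) auto
  let ?g = "Gamma a" and ?d = "Gamma (dminus q1 q2)"
  have "BTC ivs (Oplus ?g ?d) (Oplus ?g (Gamma DZero))"
    by (rule GL[OF cm]) (simp add: dminus_def hq)
  also have "BTC ivs ... (Oplus ?g Eps)" by (intro BTC.cong_Oplus BTC.refl BTC.T7)
  also have "BTC ivs ... ?g" by (rule BTC.T3)
  finally have G0: "BTC ivs (Oplus ?g ?d) ?g" .
  have "BTC ivs (Oplus ?g (Entry b q1)) (Oplus (Oplus ?g ?d) (Entry b q1))"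
    by (intro BTC.cong_Oplus BTC.refl BTC.sym[OF G0])
  also have "BTC ivs ... (Oplus ?g (Oplus ?d (Entry b q1)))" by (rule BTC.T2)
  also have "BTC ivs ... (Oplus ?g (Oplus ?d (Entry b q2)))" by (intro BTC.cong_Oplus BTC.refl BTC.T10)
  also have "BTC ivs ... (Oplus (Oplus ?g ?d) (Entry b q2))" by (rule BTC.sym, rule BTC.T2)
  also have "BTC ivs ... (Oplus ?g (Entry b q2))" by (intro BTC.cong_Oplus BTC.refl G0)
  finally show ?case by (simp add: q1_def q2_def)
next
  case (Gamma q)
  show ?case
    apply simp
    apply (rule GL[OF cm])
    unfolding deval_dsubst using Gamma by (intro deval_agree) auto
next
  case (Oplus s t)
  let ?g = "Gamma a"
  have IH1: "BTC ivs (Oplus ?g (tsubst s1 s)) (Oplus ?g (tsubst s2 s))" using Oplus by auto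
  have IH2: "BTC ivs (Oplus ?g (tsubst s1 t)) (Oplus ?g (tsubst s2 t))" using Oplus by auto
  let ?S1 = "tsubst s1 s" and ?S2 = "tsubst s2 s" and ?T1 = "tsubst s1 t" and ?T2 = "tsubst s2 t"
  have "BTC ivs (Oplus ?g (Oplus ?S1 ?T1)) (Oplus (Oplus ?g ?S1) ?T1)" by (rule BTC.sym, rule BTC.T2)
  also have "BTC ivs ... (Oplus (Oplus ?g ?S2) ?T1)" by (intro BTC.cong_Oplus BTC.refl IH1)
  also have "BTC ivs ... (Oplus (Oplus ?S2 ?g) ?T1)" by (intro BTC.cong_Oplus BTC.refl BTC.T1)
  also have "BTC ivs ... (Oplus ?S2 (Oplus ?g ?T1))" by (rule BTC.T2)
  also have "BTC ivs ... (Oplus ?S2 (Oplus ?g ?T2))" by (intro BTC.cong_Oplus BTC.refl IH2)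
  also have "BTC ivs ... (Oplus (Oplus ?S2 ?g) ?T2)" by (rule BTC.sym, rule BTC.T2)
  also have "BTC ivs ... (Oplus (Oplus ?g ?S2) ?T2)" by (intro BTC.cong_Oplus BTC.refl BTC.T1)
  also have "BTC ivs ... (Oplus ?g (Oplus ?S2 ?T2))" by (rule BTC.T2)
  finally show ?case by simp
next
  case (Plus s t)
  let ?g = "Gamma a"
  have IH1: "BTC ivs (Oplus ?g (tsubst s1 s)) (Oplus ?g (tsubst s2 s))" using Plus by auto
  have IH2: "BTC ivs (Oplus ?g (tsubst s1 t)) (Oplus ?g (tsubst s2 t))" using Plus by auto
  let ?S1 = "tsubst s1 s" and ?S2 = "tsubst s2 s" and ?T1 = "tsubst s1 t" and ?T2 = "tsubst s2 t"
  have "BTC ivs (Oplus ?g (Plus ?S1 ?T1)) (Plus (Oplus ?g ?S1) (Oplus ?g ?T1))" by (rule BTC.C5)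
  also have "BTC ivs ... (Plus (Oplus ?g ?S2) (Oplus ?g ?T2))" by (intro BTC.cong_Plus IH1 IH2)
  also have "BTC ivs ... (Oplus ?g (Plus ?S2 ?T2))" by (rule BTC.sym, rule BTC.C5)
  finally show ?case by simp
next
  case (Sum v t)
  let ?g = "Gamma a"
  obtain w1 where w1: "w1 \<notin> (\<Union>x\<in>fv t - {v}. dvars (s1 x))"
    and e1: "tsubst s1 (Sum v t) = Sum w1 (tsubst (s1(v := DVar w1)) t)" using tsubst_Sum_ex by blast
  obtain w2 where w2: "w2 \<notin> (\<Union>x\<in>fv t - {v}. dvars (s2 x))"
    and e2: "tsubst s2 (Sum v t) = Sum w2 (tsubst (s2(v := DVar w2)) t)" using tsubst_Sum_ex by blast
  define F where "F = (\<Union>x\<in>fv t - {v}. dvars (s1 x)) \<union> (\<Union>x\<in>fv t - {v}. dvars (s2 x)) \<union> dvars a"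
  have "finite F" unfolding F_def by (simp add: fv_finite dvars_finite)
  then have zF: "fresh F \<notin> F" by (rule fresh_notin)
  define z where "z = fresh F"
  have z1: "z \<notin> (\<Union>x\<in>fv t - {v}. dvars (s1 x))" and z2: "z \<notin> (\<Union>x\<in>fv t - {v}. dvars (s2 x))"
    and za: "z \<notin> dvars a" using zF unfolding z_def F_def by auto
  have IH: "BTC ivs (Oplus ?g (tsubst (s1(v := DVar z)) t)) (Oplus ?g (tsubst (s2(v := DVar z)) t))"
    using Sum.prems by (intro Sum.hyps) auto
  have "BTC ivs (Oplus ?g (Sum w1 (tsubst (s1(v := DVar w1)) t))) (Oplus ?g (Sum z (tsubst (s1(v := DVar z)) t)))"
    by (intro BTC.cong_Oplus BTC.refl AL[OF CL w1 z1])
  also have "BTC ivs ... (Sum z (Oplus ?g (tsubst (s1(v := DVar z)) t)))"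
    by (rule BTC.sym, rule BTC.S3) (simp_all add: za)
  also have "BTC ivs ... (Sum z (Oplus ?g (tsubst (s2(v := DVar z)) t)))" by (rule BTC.cong_Sum[OF IH])
  also have "BTC ivs ... (Oplus ?g (Sum z (tsubst (s2(v := DVar z)) t)))"
    by (rule BTC.S3) (simp_all add: za)
  also have "BTC ivs ... (Oplus ?g (Sum w2 (tsubst (s2(v := DVar w2)) t)))"
    by (intro BTC.cong_Oplus BTC.refl AL[OF CL z2 w2])
  finally show ?case unfolding e1 e2 .
qed (auto intro: BTC.refl)

theorem lemma4:
  fixes ivs :: "'d::comm_ring_1 \<Rightarrow> 'd" and t :: "'a tterm" and u :: nat and p :: dterm
  assumes "cancellation_meadow ivs"
    and "u \<notin> dvars p"
  shows "BTC ivs (Sum u (Oplus t (Gamma (dminus (DVar u) p)))) (subst1 t p u)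
       \<and> BTC ivs (Sum u t) (Plus (subst1 t p u) (Sum u t))
       \<and> BTC ivs (Sum u t) (Plus (subst1 t p u) (Sum u (Oplus t (Gammat (dminus (DVar u) p)))))"
proof -
  note cm = assms(1) and up = assms(2)
  define a where "a = dminus (DVar u) p"
  define t' where "t' = subst1 t p u"
  let ?g = "Gamma a" and ?gt = "Gammat a :: 'a tterm"
  have Kapp: "BTC ivs (Oplus ?g t) (Oplus ?g t')"
  proof -
    have "BTC ivs (Oplus ?g (tsubst DVar t)) (Oplus ?g (tsubst (DVar(u := p)) t))"
    proof (rule K[OF cm], intro ballI allI impI)
      fix x env assume "deval ivs env a = 0"
      then have "env u = deval ivs env p" by (simp add: a_def dminus_def)
      then show "deval ivs env (DVar x) = deval ivs env ((DVar(u := p)) x)" by auto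
    qed
    then show ?thesis by (simp add: tsubst_id t'_def subst1_def)
  qed
  have ut: "u \<notin> fv t'" using up by (auto simp: t'_def subst1_def fv_tsubst split: if_splits)
  have "BTC ivs (Sum u (Oplus t ?g)) (Sum u (Oplus ?g t))" by (intro BTC.cong_Sum BTC.T1)
  also have "BTC ivs ... (Sum u (Oplus ?g t'))" by (intro BTC.cong_Sum Kapp)
  also have "BTC ivs ... (Sum u (Oplus t' ?g))" by (intro BTC.cong_Sum BTC.T1)
  also have "BTC ivs ... (Oplus t' (Sum u ?g))" by (rule BTC.S3[OF ut])
  also have "BTC ivs ... (Oplus t' Eps)" unfolding a_def by (intro BTC.cong_Oplus BTC.refl BTC.S5 up)
  also have "BTC ivs ... t'" by (rule BTC.T3)
  finally have P1: "BTC ivs (Sum u (Oplus t ?g)) t'" .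
  have v: "dvalid ivs (DMul a (dminus DOne (ddiv a a))) DZero"
    unfolding dvalid_def ddiv_def dminus_def
    using cm_cancel[OF cm] by (simp add: algebra_simps)
  have "BTC ivs (Plus ?g ?gt) (Gamma (DMul a (dminus DOne (ddiv a a))))" unfolding Gammat_def by (rule BTC.C6)
  also have "BTC ivs ... (Gamma DZero)" by (rule BTC.DE[OF v])
  also have "BTC ivs ... Eps" by (rule BTC.T7)
  finally have EG: "BTC ivs (Plus ?g ?gt) Eps" .
  have "BTC ivs (Sum u t) (Sum u (Oplus t Eps))" by (intro BTC.cong_Sum BTC.sym[OF BTC.T3])
  also have "BTC ivs ... (Sum u (Oplus t (Plus ?g ?gt)))" by (intro BTC.cong_Sum BTC.cong_Oplus BTC.refl BTC.sym[OF EG])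
  also have "BTC ivs ... (Sum u (Plus (Oplus t ?g) (Oplus t ?gt)))" by (intro BTC.cong_Sum BTC.C5)
  also have "BTC ivs ... (Plus (Sum u (Oplus t ?g)) (Sum u (Oplus t ?gt)))" by (rule BTC.S4)
  also have "BTC ivs ... (Plus t' (Sum u (Oplus t ?gt)))" by (intro BTC.cong_Plus P1 BTC.refl)
  finally have P3: "BTC ivs (Sum u t) (Plus t' (Sum u (Oplus t ?gt)))" .
  have "BTC ivs (Sum u t) (Plus t' (Sum u (Oplus t ?gt)))" by (rule P3)
  also have "BTC ivs ... (Plus (Plus t' t') (Sum u (Oplus t ?gt)))" by (intro BTC.cong_Plus BTC.refl BTC.sym[OF BTC.C3])
  also have "BTC ivs ... (Plus t' (Plus t' (Sum u (Oplus t ?gt))))" by (rule BTC.C2)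
  also have "BTC ivs ... (Plus t' (Sum u t))" by (intro BTC.cong_Plus BTC.refl BTC.sym[OF P3])
  finally have P2: "BTC ivs (Sum u t) (Plus t' (Sum u t))" .
  show ?thesis using P1 P2 P3 unfolding a_def t'_def by blast
qed

end
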